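(* Let $(X,d)$ be a compact metric space and $f\colon X\to X$ an equicontinuous homeomorphism. The following are equivalent: (1) $f$ has the limit shadowing property; (2) $f$ has the shadowing property; (3) $\dim X=0$, equivalently $X$ is totally disconnected.
   Context: $f$ is equicontinuous if for every $\epsilon>0$ there is $\delta>0$ such that $d(x,y)\le\delta$ implies $\sup_{n\ge0}d(f^n(x),f^n(y))\le\epsilon$. Shadowing property: for every $\epsilon>0$ there is $\delta>0$ such that every sequence $(x_i)_{i\ge0}$ with $d(f(x_i),x_{i+1})\le\delta$ for all $i$ admits $x\in X$ with $d(x_i,f^i(x))\le\epsilon$ for all $i$. Limit shadowing property: every sequence $(x_i)_{i\ge0}$ with $\lim_i d(f(x_i),x_{i+1})=0$ admits $y\in X$ with $\lim_i d(x_i,f^i(y))=0$. *)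

theory Defs
  imports "HOL-Analysis.Analysis"
begin

text \<open>All notions are relative to the compact subset X of a metric space,
  with the restricted metric.\<close>

definition equicontinuous_on :: "'a::metric_space set \<Rightarrow> ('a \<Rightarrow> 'a) \<Rightarrow> bool" where
  "equicontinuous_on X f \<longleftrightarrow>
     (\<forall>e>0. \<exists>\<delta>>0. \<forall>x\<in>X. \<forall>y\<in>X. dist x y \<le> \<delta> \<longrightarrow>
        (\<forall>n. dist ((f ^^ n) x) ((f ^^ n) y) \<le> e))"

definition shadowing_on :: "'a::metric_space set \<Rightarrow> ('a \<Rightarrow> 'a) \<Rightarrow> bool" where
  "shadowing_on X f \<longleftrightarrow>
     (\<forall>e>0. \<exists>\<delta>>0. \<forall>xs::nat \<Rightarrow> 'a.
        (\<forall>i. xs i \<in> X) \<and> (\<forall>i. dist (f (xs i)) (xs (Suc i)) \<le> \<delta>) \<longrightarrow>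
        (\<exists>x\<in>X. \<forall>i. dist (xs i) ((f ^^ i) x) \<le> e))"

definition limit_shadowing_on :: "'a::metric_space set \<Rightarrow> ('a \<Rightarrow> 'a) \<Rightarrow> bool" where
  "limit_shadowing_on X f \<longleftrightarrow>
     (\<forall>xs::nat \<Rightarrow> 'a.
        (\<forall>i. xs i \<in> X) \<and> (\<lambda>i. dist (f (xs i)) (xs (Suc i))) \<longlonglongrightarrow> 0 \<longrightarrow>
        (\<exists>y\<in>X. (\<lambda>i. dist (xs i) ((f ^^ i) y)) \<longlonglongrightarrow> 0))"

definition totally_disconnected :: "'a::topological_space set \<Rightarrow> bool" where
  "totally_disconnected X \<longleftrightarrow> (\<forall>S. S \<subseteq> X \<and> connected S \<longrightarrow> (\<exists>a. S \<subseteq> {a}))"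

end

theory Submission
  imports Defs
begin

definition chain :: "'a::metric_space set \<Rightarrow> real \<Rightarrow> 'a \<Rightarrow> 'a \<Rightarrow> (nat \<Rightarrow> 'a) \<Rightarrow> nat \<Rightarrow> bool" where
  "chain S e a b c K \<longleftrightarrow> c 0 = a \<and> c K = b \<and> (\<forall>i\<le>K. c i \<in> S) \<and> (\<forall>i<K. dist (c i) (c (Suc i)) < e)"

definition chained :: "'a::metric_space set \<Rightarrow> real \<Rightarrow> 'a \<Rightarrow> 'a \<Rightarrow> bool" where
  "chained S e a b \<longleftrightarrow> (\<exists>c K. chain S e a b c K)"

lemma chain_append:
  assumes c: "chain S e a b c K" and c': "chain S e b d c' K'"
  shows "chain S e a d (\<lambda>i. if i \<le> K then c i else c' (i - K)) (K + K')"
  unfolding chain_def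
proof (intro conjI allI impI)
  show "(if 0 \<le> K then c 0 else c' (0 - K)) = a" using c unfolding chain_def by simp
  show "(if K + K' \<le> K then c (K + K') else c' (K + K' - K)) = d"
  proof (cases "K' = 0")
    case True then show ?thesis using c c' unfolding chain_def by auto
  next
    case False then show ?thesis using c' unfolding chain_def by simp
  qed
  fix i
  show "i \<le> K + K' \<Longrightarrow> (if i \<le> K then c i else c' (i - K)) \<in> S"
  proof -
    assume "i \<le> K + K'"
    then have "i - K \<le> K'" by simp
    then show ?thesis using c c' unfolding chain_def by simp
  qed
  assume i: "i < K + K'"
  consider "i < K" | "i = K" | "K < i" by linarith
  then show "dist (if i \<le> K then c i else c' (i - K)) (if Suc i \<le> K then c (Suc i) else c' (Suc i - K)) < e"
  proof cases
    case 1 then show ?thesis using c unfolding chain_def by simp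
  next
    case 2
    then have "Suc i - K = Suc 0" "0 < K'" using i by simp_all
    moreover have "c K = c' 0" using c c' unfolding chain_def by simp
    moreover have "dist (c' 0) (c' (Suc 0)) < e" using c' \<open>0 < K'\<close> unfolding chain_def by blast
    ultimately show ?thesis using 2 by simp
  next
    case 3
    then have "Suc i - K = Suc (i - K)" "i - K < K'" using i by simp_all
    then show ?thesis using c' 3 unfolding chain_def by simp
  qed
qed

lemma chain_rev:
  assumes "chain S e a b c K"
  shows "chain S e b a (\<lambda>i. c (K - i)) K"
proof -
  have "dist (c (K - i)) (c (K - Suc i)) < e" if "i < K" for i
  proof -
    have eq: "K - i = Suc (K - Suc i)" using that by simp
    have "K - Suc i < K" using that by simp
    then have "dist (c (K - Suc i)) (c (Suc (K - Suc i))) < e" using assms unfolding chain_def by blast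
    then show ?thesis by (simp add: eq dist_commute)
  qed
  then show ?thesis using assms unfolding chain_def by auto
qed

lemma chained_trans: "chained S e a b \<Longrightarrow> chained S e b d \<Longrightarrow> chained S e a d"
  unfolding chained_def using chain_append by blast

lemma chained_sym: "chained S e a b \<Longrightarrow> chained S e b a"
  unfolding chained_def using chain_rev by blast

lemma chained_refl: "a \<in> S \<Longrightarrow> chained S e a a"
  unfolding chained_def chain_def by (rule exI[of _ "\<lambda>_. a"], rule exI[of _ 0]) auto

lemma chained_step: "a \<in> S \<Longrightarrow> b \<in> S \<Longrightarrow> dist a b < e \<Longrightarrow> chained S e a b"
  unfolding chained_def chain_def
  by (rule exI[of _ "\<lambda>i. if i = 0 then a else b"], rule exI[of _ 1]) auto

lemma chain_mono: "chain S e a b c K \<Longrightarrow> e \<le> e' \<Longrightarrow> chain S e' a b c K"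
  unfolding chain_def using less_le_trans by blast

lemma chained_mono: "chained S e a b \<Longrightarrow> e \<le> e' \<Longrightarrow> chained S e' a b"
  unfolding chained_def using chain_mono by blast

lemma chain_mem: "chain S e a b c K \<Longrightarrow> a \<in> S \<and> b \<in> S"
  unfolding chain_def by (metis le0 order_refl)

lemma chained_mem: "chained S e a b \<Longrightarrow> a \<in> S \<and> b \<in> S"
  unfolding chained_def using chain_mem by blast

lemma chain_connected:
  assumes "connected S" "a \<in> S" "b \<in> S" "e > 0"
  shows "chained S e a b"
proof (rule connected_equivalence_relation[OF assms(1-3), where R = "chained S e"])
  show "chained S e y x" if "chained S e x y" for x y using that chained_sym by blast
  show "chained S e x z" if "chained S e x y" "chained S e y z" for x y z using that chained_trans by blast
  fix a assume a: "a \<in> S"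
  show "\<exists>T. openin (top_of_set S) T \<and> a \<in> T \<and> (\<forall>x\<in>T. chained S e a x)"
    by (rule exI[of _ "S \<inter> ball a e"]) (use assms(4) in \<open>auto simp: openin_open_Int a intro!: chained_step\<close>)
qed


definition KC :: "'a::metric_space set \<Rightarrow> 'a \<Rightarrow> 'a set" where
  "KC X a = {b \<in> X. \<forall>e>0. chained X e a b}"

lemma chained_step_right:
  assumes "chained X e a b" "l \<in> X" "dist b l < e"
  shows "chained X e a l"
proof -
  have "b \<in> X" using chained_mem[OF assms(1)] by blast
  then show ?thesis using chained_trans[OF assms(1) chained_step[OF _ assms(2,3)]] by blast
qed

lemma KC_closure:
  assumes "l \<in> X" "\<And>e. e > 0 \<Longrightarrow> \<exists>b. chained X e a b \<and> dist b l < e"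
  shows "l \<in> KC X a"
  unfolding KC_def using assms chained_step_right by blast

lemma KC_sub: "KC X a \<subseteq> X"
  unfolding KC_def by blast

lemma KC_refl: "a \<in> X \<Longrightarrow> a \<in> KC X a"
  unfolding KC_def using chained_refl by blast

lemma KC_closed:
  assumes "compact X"
  shows "closed (KC X a)"
  unfolding closed_sequential_limits
proof (intro allI impI)
  fix x l
  assume h: "(\<forall>n. x n \<in> KC X a) \<and> x \<longlonglongrightarrow> l"
  have "closed X" using assms compact_imp_closed by blast
  then have lX: "l \<in> X" using h KC_sub closed_sequential_limits by blast
  show "l \<in> KC X a"
  proof (rule KC_closure[OF lX])
    fix e :: real assume e: "e > 0"
    obtain N where N: "\<forall>n\<ge>N. dist (x n) l < e" using h e unfolding lim_sequentially by blast
    have "chained X e a (x N)" using h e unfolding KC_def by blast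
    then show "\<exists>b. chained X e a b \<and> dist b l < e" using N by blast
  qed
qed

lemma chain_trunc:
  assumes "chain S e a b c K" "i \<le> K"
  shows "chain S e a (c i) c i"
  using assms unfolding chain_def by auto

lemma KC_sep_aux:
  fixes X :: "'a::metric_space set"
  assumes X: "compact X" and aX: "a \<in> X"
    and A: "open A" and B: "open B" and cov: "KC X a \<subseteq> A \<union> B" and disj: "A \<inter> B \<inter> KC X a = {}"
    and aA: "a \<in> A" and bB: "b \<in> B \<inter> KC X a"
  shows False
proof -
  define K where "K = KC X a"
  have Kcomp: "compact K"
  proof -
    have "compact (X \<inter> KC X a)" using compact_Int_closed[OF X KC_closed[OF X]] .
    moreover have "X \<inter> KC X a = KC X a" using KC_sub by blast
    ultimately show ?thesis unfolding K_def by simp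
  qed
  have aK: "a \<in> K" unfolding K_def using KC_refl[OF aX] .
  obtain e where e: "e > 0" and eb: "\<And>x. x \<in> K \<Longrightarrow> \<exists>G\<in>{A,B}. ball x e \<subseteq> G"
    using Heine_Borel_lemma[OF Kcomp, of "{A,B}"] cov A B unfolding K_def by auto
  define r where "r = e / 3"
  have r: "r > 0" unfolding r_def using e by simp
  define P where "P q \<longleftrightarrow> (\<exists>k\<in>A \<inter> K. dist q k < r)" for q
  define Q where "Q q \<longleftrightarrow> (\<exists>k\<in>B \<inter> K. dist q k < r)" for q
  have fact1: False if hP: "P q" and hQ: "Q q'" and hd: "dist q q' < r" for q q'
  proof -
    obtain k where k: "k \<in> A \<inter> K" "dist q k < r" using hP[unfolded P_def] by blast
    obtain k' where k': "k' \<in> B \<inter> K" "dist q' k' < r" using hQ[unfolded Q_def] by blast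
    have t1: "dist k k' \<le> dist k q + dist q k'" by (rule dist_triangle)
    have t2: "dist q k' \<le> dist q q' + dist q' k'" by (rule dist_triangle)
    have "dist k k' \<le> dist k q + dist q q' + dist q' k'" using t1 t2 by linarith
    also have "\<dots> < e" using k k' hd unfolding r_def by (simp add: dist_commute)
    finally have kk: "k' \<in> ball k e" by simp
    have kb: "k \<in> ball k e" using e by simp
    from eb[of k] k(1) consider "ball k e \<subseteq> A" | "ball k e \<subseteq> B" by auto
    then show False
    proof cases
      case 1 then have "k' \<in> A" using kk by blast
      then show False using k' disj unfolding K_def by blast
    next
      case 2 then have "k \<in> B" using kb by blast
      then show False using k disj unfolding K_def by blast
    qed
  qed
  have bK: "b \<in> K" using bB unfolding K_def by blast
  have "\<forall>n. \<exists>p. chained X (1 / (real n + 1)) a p \<and> \<not> P p \<and> \<not> Q p"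
  proof
  fix n
    define \<eta> where "\<eta> = min r (1 / (real n + 1))"
    have \<eta>: "\<eta> > 0" unfolding \<eta>_def using r by simp
    have "chained X \<eta> a b" using bK \<eta> unfolding K_def KC_def by blast
    then obtain c M where c: "chain X \<eta> a b c M" unfolding chained_def by blast
    have "\<exists>i\<le>M. \<not> P (c i) \<and> \<not> Q (c i)"
    proof (rule ccontr)
      assume "\<not> ?thesis"
      then have PQ: "\<And>i. i \<le> M \<Longrightarrow> P (c i) \<or> Q (c i)" by blast
      have "i \<le> M \<longrightarrow> P (c i)" for i
      proof (induction i)
        case 0
        have "c 0 = a" using c unfolding chain_def by blast
        then show ?case unfolding P_def using aA aK r by (intro impI bexI[of _ a]) auto
      next
        case (Suc i)
        show ?case
        proof
          assume si: "Suc i \<le> M"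
          then have Pi: "P (c i)" using Suc by simp
          have "dist (c i) (c (Suc i)) < \<eta>" using c si unfolding chain_def by simp
          then have d: "dist (c i) (c (Suc i)) < r" unfolding \<eta>_def by simp
          show "P (c (Suc i))" using PQ[OF si] fact1[OF Pi _ d] by blast
        qed
      qed
      then have "P (c M)" by blast
      moreover have "c M = b" using c unfolding chain_def by blast
      moreover have "Q b" unfolding Q_def using bB bK r by (intro bexI[of _ b]) auto
      ultimately show False using fact1[of b b] r by simp
    qed
    then obtain i where i: "i \<le> M" "\<not> P (c i)" "\<not> Q (c i)" by blast
    have "chain X \<eta> a (c i) c i" using chain_trunc[OF c i(1)] .
    then have "chained X \<eta> a (c i)" unfolding chained_def by blast
    moreover have "\<eta> \<le> 1 / (real n + 1)" unfolding \<eta>_def by simp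
    ultimately have "chained X (1 / (real n + 1)) a (c i)" by (rule chained_mono)
    then show "\<exists>p. chained X (1 / (real n + 1)) a p \<and> \<not> P p \<and> \<not> Q p" using i by blast
  qed
  then obtain p where p0: "\<forall>n. chained X (1 / (real n + 1)) a (p n) \<and> \<not> P (p n) \<and> \<not> Q (p n)"
    using choice[of "\<lambda>n p. chained X (1 / (real n + 1)) a p \<and> \<not> P p \<and> \<not> Q p"] by blast
  have p: "\<And>n. chained X (1 / (real n + 1)) a (p n)" "\<And>n. \<not> P (p n)" "\<And>n. \<not> Q (p n)"
    using p0 by blast+
  have pX: "\<And>n. p n \<in> X" using p(1) chained_mem by blast
  obtain l s where l: "l \<in> X" "strict_mono s" "(p \<circ> s) \<longlonglongrightarrow> l"
    using seq_compactE[OF compact_imp_seq_compact[OF X], of p] pX by blast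
  have lK: "l \<in> K" unfolding K_def
  proof (rule KC_closure[OF l(1)])
    fix e' :: real assume e': "e' > 0"
    obtain N1 where N1: "\<forall>m\<ge>N1. dist ((p \<circ> s) m) l < e'" using l(3) e' unfolding lim_sequentially by blast
    obtain N2 where N2: "inverse (real (Suc N2)) < e'" using reals_Archimedean[OF e'] by blast
    define m where "m = max N1 N2"
    have "s m \<ge> m" using seq_suble[OF l(2)] .
    then have "s m \<ge> N2" unfolding m_def by simp
    then have "real N2 + 1 \<le> real (s m) + 1" by simp
    then have "1 / (real (s m) + 1) \<le> 1 / (real N2 + 1)"
      by (intro divide_left_mono) auto
    moreover have "inverse (real (Suc N2)) = 1 / (real N2 + 1)" by (simp add: inverse_eq_divide)
    ultimately have "1 / (real (s m) + 1) \<le> inverse (real (Suc N2))" by simp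
    then have "1 / (real (s m) + 1) \<le> e'" using N2 by linarith
    then have "chained X e' a (p (s m))" using p(1)[of "s m"] chained_mono by blast
    moreover have "dist (p (s m)) l < e'" using N1 unfolding m_def by simp
    ultimately show "\<exists>b. chained X e' a b \<and> dist b l < e'" by blast
  qed
  obtain m where m: "dist ((p \<circ> s) m) l < r" using l(3) r unfolding lim_sequentially by blast
  have "l \<in> A \<or> l \<in> B" using lK cov unfolding K_def by blast
  then show False
  proof
    assume "l \<in> A" then have "P (p (s m))" unfolding P_def using lK m by (intro bexI[of _ l]) auto
    then show False using p(2) by blast
  next
    assume "l \<in> B" then have "Q (p (s m))" unfolding Q_def using lK m by (intro bexI[of _ l]) auto
    then show False using p(3) by blast
  qed
qed

lemma KC_connected:
  assumes X: "compact X" and aX: "a \<in> X"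
  shows "connected (KC X a)"
proof (rule connectedI)
  fix A B
  assume A: "open A" and B: "open B" and An: "A \<inter> KC X a \<noteq> {}" and Bn: "B \<inter> KC X a \<noteq> {}"
    and disj: "A \<inter> B \<inter> KC X a = {}" and cov: "KC X a \<subseteq> A \<union> B"
  have "a \<in> A \<or> a \<in> B" using KC_refl[OF aX] cov by blast
  then show False
  proof
    assume "a \<in> A"
    obtain b where "b \<in> B \<inter> KC X a" using Bn by blast
    then show False using KC_sep_aux[OF X aX A B cov disj \<open>a \<in> A\<close>] by blast
  next
    assume "a \<in> B"
    obtain b where "b \<in> A \<inter> KC X a" using An by blast
    moreover have "KC X a \<subseteq> B \<union> A" "B \<inter> A \<inter> KC X a = {}" using cov disj by blast+
    ultimately show False using KC_sep_aux[OF X aX B A] \<open>a \<in> B\<close> by blast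
  qed
qed


lemma KC_TD:
  assumes "compact X" "totally_disconnected X" "a \<in> X" "b \<in> KC X a"
  shows "b = a"
proof -
  have "connected (KC X a)" using KC_connected assms by blast
  then obtain c where "KC X a \<subseteq> {c}" using assms(2) KC_sub unfolding totally_disconnected_def by blast
  then show ?thesis using KC_refl[OF assms(3)] assms(4) by blast
qed

lemma small_chains:
  fixes X :: "'a::metric_space set"
  assumes X: "compact X" and TD: "totally_disconnected X" and eps: "\<epsilon> > 0"
  shows "\<exists>\<eta>>0. \<forall>a\<in>X. \<forall>b\<in>X. chained X \<eta> a b \<longrightarrow> dist a b < \<epsilon>"
proof (rule ccontr)
  assume neg: "\<not> (\<exists>\<eta>>0. \<forall>a\<in>X. \<forall>b\<in>X. chained X \<eta> a b \<longrightarrow> dist a b < \<epsilon>)"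
  have "\<forall>n. \<exists>q. fst q \<in> X \<and> snd q \<in> X \<and> chained X (1 / (real n + 1)) (fst q) (snd q) \<and> dist (fst q) (snd q) \<ge> \<epsilon>"
  proof
    fix n
    have pos: "1 / (real n + 1) > 0" by simp
    then obtain a b where ab: "a \<in> X" "b \<in> X" "chained X (1 / (real n + 1)) a b" "\<not> dist a b < \<epsilon>"
      using neg by blast
    then show "\<exists>q. fst q \<in> X \<and> snd q \<in> X \<and> chained X (1 / (real n + 1)) (fst q) (snd q) \<and> dist (fst q) (snd q) \<ge> \<epsilon>"
      by (intro exI[of _ "(a,b)"]) auto
  qed
  then obtain q where q: "\<forall>n. fst (q n) \<in> X \<and> snd (q n) \<in> X \<and> chained X (1 / (real n + 1)) (fst (q n)) (snd (q n)) \<and> dist (fst (q n)) (snd (q n)) \<ge> \<epsilon>"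
    using choice[of "\<lambda>n q. fst q \<in> X \<and> snd q \<in> X \<and> chained X (1 / (real n + 1)) (fst q) (snd q) \<and> dist (fst q) (snd q) \<ge> \<epsilon>"] by blast
  have qX: "\<forall>n. q n \<in> X \<times> X" using q by (simp add: mem_Times_iff)
  obtain l s where l: "l \<in> X \<times> X" "strict_mono s" "(q \<circ> s) \<longlonglongrightarrow> l"
    using seq_compactE[OF compact_imp_seq_compact[OF compact_Times[OF X X]] qX] by blast
  define la where "la = fst l"
  define lb where "lb = snd l"
  have laX: "la \<in> X" and lbX: "lb \<in> X" using l(1) unfolding la_def lb_def by (auto simp: mem_Times_iff)
  have conv: "\<forall>r>0. \<exists>N. \<forall>m\<ge>N. dist (fst (q (s m))) la < r \<and> dist (snd (q (s m))) lb < r"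
  proof (intro allI impI)
    fix r :: real assume r: "r > 0"
    obtain N where N: "\<forall>m\<ge>N. dist ((q \<circ> s) m) l < r" using l(3) r unfolding lim_sequentially by blast
    have "dist (fst (q (s m))) la < r \<and> dist (snd (q (s m))) lb < r" if "m \<ge> N" for m
    proof -
      have "dist (q (s m)) l < r" using N that by simp
      then show ?thesis unfolding la_def lb_def using dist_fst_le[of "q (s m)" l] dist_snd_le[of "q (s m)" l] by linarith
    qed
    then show "\<exists>N. \<forall>m\<ge>N. dist (fst (q (s m))) la < r \<and> dist (snd (q (s m))) lb < r" by blast
  qed
  have "lb \<in> KC X la"
  proof (rule KC_closure[OF lbX])
    fix e :: real assume e: "e > 0"
    obtain N1 where N1: "\<forall>m\<ge>N1. dist (fst (q (s m))) la < e \<and> dist (snd (q (s m))) lb < e" using conv e by blast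
    obtain N2 where N2: "inverse (real (Suc N2)) < e" using reals_Archimedean[OF e] by blast
    define m where "m = max N1 N2"
    have "s m \<ge> m" using seq_suble[OF l(2)] .
    then have "s m \<ge> N2" unfolding m_def by simp
    then have "real N2 + 1 \<le> real (s m) + 1" by simp
    then have "1 / (real (s m) + 1) \<le> 1 / (real N2 + 1)"
      by (intro divide_left_mono) auto
    moreover have "inverse (real (Suc N2)) = 1 / (real N2 + 1)" by (simp add: inverse_eq_divide)
    ultimately have le: "1 / (real (s m) + 1) \<le> e" using N2 by linarith
    have c1: "chained X e (fst (q (s m))) (snd (q (s m)))" using q le chained_mono by blast
    have d1: "dist (fst (q (s m))) la < e" "dist (snd (q (s m))) lb < e" using N1 unfolding m_def by simp_all
    have "chained X e la (fst (q (s m)))"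
      using chained_step[OF laX _ ] q d1(1) by (simp add: dist_commute)
    then have "chained X e la (snd (q (s m)))" using chained_trans c1 by blast
    then show "\<exists>b. chained X e la b \<and> dist b lb < e" using d1(2) by blast
  qed
  then have eq: "lb = la" using KC_TD[OF X TD laX] by blast
  obtain N where N: "\<forall>m\<ge>N. dist (fst (q (s m))) la < \<epsilon>/2 \<and> dist (snd (q (s m))) lb < \<epsilon>/2"
    using conv eps by (meson half_gt_zero)
  have "dist (fst (q (s N))) (snd (q (s N))) \<le> dist (fst (q (s N))) la + dist (snd (q (s N))) la"
    by (rule dist_triangle2)
  also have "\<dots> < \<epsilon>" using N eq by fastforce
  finally show False using q by (meson not_less)
qed

lemma chain_class_clopen:
  fixes X :: "'a::metric_space set"
  assumes "\<eta> > 0" "x \<in> X"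
  shows "openin (top_of_set X) {b\<in>X. chained X \<eta> x b} \<and> closedin (top_of_set X) {b\<in>X. chained X \<eta> x b}"
proof
  define U where "U = {b\<in>X. chained X \<eta> x b}"
  have "U = X \<inter> (\<Union>b\<in>U. ball b \<eta>)"
  proof
    show "U \<subseteq> X \<inter> (\<Union>b\<in>U. ball b \<eta>)" using assms(1) unfolding U_def by auto
    show "X \<inter> (\<Union>b\<in>U. ball b \<eta>) \<subseteq> U"
    proof
      fix y assume "y \<in> X \<inter> (\<Union>b\<in>U. ball b \<eta>)"
      then obtain b where "y \<in> X" "b \<in> U" "dist b y < \<eta>" by auto
      then show "y \<in> U" unfolding U_def using chained_step_right by blast
    qed
  qed
  moreover have "open (\<Union>b\<in>U. ball b \<eta>)" by blast
  ultimately show "openin (top_of_set X) {b\<in>X. chained X \<eta> x b}" unfolding U_def openin_open by blast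
  have "U = X \<inter> - (\<Union>b\<in>X - U. ball b \<eta>)"
  proof
    show "U \<subseteq> X \<inter> - (\<Union>b\<in>X - U. ball b \<eta>)"
    proof
      fix y assume y: "y \<in> U"
      have "y \<notin> ball b \<eta>" if "b \<in> X - U" for b
      proof
        assume "y \<in> ball b \<eta>"
        then have "dist y b < \<eta>" by (simp add: dist_commute)
        then have "b \<in> U" using y that unfolding U_def using chained_step_right by blast
        then show False using that by blast
      qed
      then show "y \<in> X \<inter> - (\<Union>b\<in>X - U. ball b \<eta>)" using y unfolding U_def by blast
    qed
    show "X \<inter> - (\<Union>b\<in>X - U. ball b \<eta>) \<subseteq> U"
    proof
      fix y assume y: "y \<in> X \<inter> - (\<Union>b\<in>X - U. ball b \<eta>)"
      show "y \<in> U"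
      proof (rule ccontr)
        assume "y \<notin> U"
        then have "y \<in> ball y \<eta>" "y \<in> X - U" using y assms(1) by auto
        then have "y \<in> (\<Union>b\<in>X - U. ball b \<eta>)" by blast
        then show False using y by blast
      qed
    qed
  qed
  moreover have "closed (- (\<Union>b\<in>X - U. ball b \<eta>))" by blast
  ultimately show "closedin (top_of_set X) {b\<in>X. chained X \<eta> x b}" unfolding U_def closedin_closed by blast
qed

lemma dim0_iff_TD:
  fixes X :: "'a::metric_space set"
  assumes X: "compact X"
  shows "(top_of_set X) dim_le 0 \<longleftrightarrow> totally_disconnected X"
proof -
  have nb: "(top_of_set X) dim_le 0 \<longleftrightarrow> (\<forall>W x. openin (top_of_set X) W \<and> x \<in> W \<longrightarrow>
      (\<exists>U. (closedin (top_of_set X) U \<and> openin (top_of_set X) U) \<and> x \<in> U \<and> U \<subseteq> W))"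
    unfolding dimension_le_0_neighbourhood_base_of_clopen
    by (rule open_neighbourhood_base_of) blast
  show ?thesis
  proof
    assume d: "(top_of_set X) dim_le 0"
    show "totally_disconnected X"
      unfolding totally_disconnected_def
    proof (intro allI impI)
      fix S assume S: "S \<subseteq> X \<and> connected S"
      show "\<exists>a. S \<subseteq> {a}"
      proof (cases "S = {}")
        case True then show ?thesis by blast
      next
        case False
        then obtain a where aS: "a \<in> S" by blast
        have "b = a" if bS: "b \<in> S" for b
        proof (rule ccontr)
          assume ba: "b \<noteq> a"
          have "openin (top_of_set X) (X - {b})"
            unfolding openin_open by (rule exI[of _ "- {b}"]) (auto simp: open_Compl)
          moreover have "a \<in> X - {b}" using aS S ba by blast
          ultimately obtain U where U: "closedin (top_of_set X) U" "openin (top_of_set X) U" "a \<in> U" "U \<subseteq> X - {b}"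
            using d nb by blast
          obtain T1 where T1: "open T1" "U = X \<inter> T1" using U(2) unfolding openin_open by blast
          obtain C where C: "closed C" "U = X \<inter> C" using U(1) unfolding closedin_closed by blast
          have "open (- C)" using C(1) by (simp add: open_Compl)
          moreover have "S \<subseteq> T1 \<union> - C" using S T1 C by blast
          moreover have "T1 \<inter> - C \<inter> S = {}" using S T1 C by blast
          moreover have "T1 \<inter> S \<noteq> {}" using aS U T1 by blast
          moreover have "- C \<inter> S \<noteq> {}" using bS S U C by blast
          ultimately show False using S T1(1) unfolding connected_def by blast
        qed
        then show ?thesis by blast
      qed
    qed
  next
    assume TD: "totally_disconnected X"
    show "(top_of_set X) dim_le 0"
      unfolding nb
    proof (intro allI impI)
      fix W x assume Wx: "openin (top_of_set X) W \<and> x \<in> W"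
      obtain T where T: "open T" "W = X \<inter> T" using Wx unfolding openin_open by blast
      have xX: "x \<in> X" "x \<in> T" using Wx T by auto
      obtain \<epsilon> where eps: "\<epsilon> > 0" "ball x \<epsilon> \<subseteq> T" using T(1) xX(2) open_contains_ball by blast
      obtain \<eta> where eta: "\<eta> > 0" "\<forall>a\<in>X. \<forall>b\<in>X. chained X \<eta> a b \<longrightarrow> dist a b < \<epsilon>"
        using small_chains[OF X TD eps(1)] by blast
      define U where "U = {b\<in>X. chained X \<eta> x b}"
      have "U \<subseteq> W"
      proof
        fix b assume "b \<in> U"
        then have "b \<in> X" "dist x b < \<epsilon>" using eta xX unfolding U_def by auto
        then show "b \<in> W" using eps T by auto
      qed
      moreover have "x \<in> U" unfolding U_def using chained_refl xX by blast
      ultimately show "\<exists>U. (closedin (top_of_set X) U \<and> openin (top_of_set X) U) \<and> x \<in> U \<and> U \<subseteq> W"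
        using chain_class_clopen[OF eta(1) xX(1)] unfolding U_def by blast
    qed
  qed
qed


locale eqsys =
  fixes X :: "'a::metric_space set" and f g :: "'a \<Rightarrow> 'a"
  assumes cX: "compact X" and hom: "homeomorphism X X f g" and eqc: "equicontinuous_on X f"
begin

lemma f_in: "x \<in> X \<Longrightarrow> f x \<in> X"
  using hom unfolding homeomorphism_def by blast

lemma g_in: "x \<in> X \<Longrightarrow> g x \<in> X"
  using hom unfolding homeomorphism_def by blast

lemma fg: "y \<in> X \<Longrightarrow> f (g y) = y"
  using hom unfolding homeomorphism_def by blast

lemma fpow_in: "x \<in> X \<Longrightarrow> (f ^^ n) x \<in> X"
  by (induction n) (auto simp: f_in)

lemma gpow_in: "x \<in> X \<Longrightarrow> (g ^^ n) x \<in> X"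
  by (induction n) (auto simp: g_in)

lemma fg_pow: "y \<in> X \<Longrightarrow> (f ^^ n) ((g ^^ n) y) = y"
proof (induction n)
  case 0 then show ?case by simp
next
  case (Suc n)
  have e1: "(g ^^ Suc n) y = g ((g ^^ n) y)" by simp
  have e2: "(f ^^ Suc n) w = (f ^^ n) (f w)" for w by (simp add: funpow_swap1)
  have "(f ^^ Suc n) ((g ^^ Suc n) y) = (f ^^ n) (f (g ((g ^^ n) y)))"
    by (simp only: e1 e2)
  also have "\<dots> = (f ^^ n) ((g ^^ n) y)" using fg gpow_in Suc.prems by simp
  finally show ?case using Suc by simp
qed

lemma fg_pow2: "y \<in> X \<Longrightarrow> i \<le> j \<Longrightarrow> (f ^^ j) ((g ^^ i) y) = (f ^^ (j - i)) y"
proof -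
  assume y: "y \<in> X" and ij: "i \<le> j"
  have "(f ^^ j) = (f ^^ (j - i)) \<circ> (f ^^ i)" using ij funpow_add[of "j - i" i f] by simp
  then show ?thesis using fg_pow[OF y, of i] by simp
qed

lemma fpow_shift: "(f ^^ s) x = (f ^^ (s - t)) ((f ^^ t) x)" if "t \<le> s"
proof -
  have "(f ^^ s) = (f ^^ (s - t)) \<circ> (f ^^ t)" using that funpow_add[of "s - t" t f] by simp
  then show ?thesis by simp
qed

lemma f_fpow: "f ((f ^^ n) x) = (f ^^ Suc n) x"
  by simp

lemma eqcD: "e > 0 \<Longrightarrow> \<exists>\<delta>>0. \<forall>x\<in>X. \<forall>y\<in>X. dist x y \<le> \<delta> \<longrightarrow> (\<forall>n. dist ((f ^^ n) x) ((f ^^ n) y) \<le> e)"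
  using eqc unfolding equicontinuous_on_def by blast

lemma propagate:
  assumes d: "\<forall>x\<in>X. \<forall>y\<in>X. dist x y \<le> \<delta> \<longrightarrow> (\<forall>n. dist ((f ^^ n) x) ((f ^^ n) y) \<le> e)"
    and xz: "x \<in> X" "z \<in> X" and t: "dist ((f ^^ t) x) ((f ^^ t) z) \<le> \<delta>" and s: "t \<le> s"
  shows "dist ((f ^^ s) x) ((f ^^ s) z) \<le> e"
proof -
  have "dist ((f ^^ (s - t)) ((f ^^ t) x)) ((f ^^ (s - t)) ((f ^^ t) z)) \<le> e"
    using d fpow_in xz t by blast
  then show ?thesis using fpow_shift[OF s] by metis
qed

lemma recur:
  assumes x: "x \<in> X" and y: "y \<in> X" and eps: "\<epsilon> > 0"
  shows "\<exists>m\<ge>K. dist ((f ^^ m) x) x \<le> \<epsilon> \<and> dist ((f ^^ m) y) y \<le> \<epsilon>"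
proof -
  obtain \<delta> where \<delta>: "\<delta> > 0" "\<forall>x\<in>X. \<forall>y\<in>X. dist x y \<le> \<delta> \<longrightarrow> (\<forall>n. dist ((f ^^ n) x) ((f ^^ n) y) \<le> \<epsilon>)"
    using eqcD[OF eps] by blast
  define p where "p n = ((g ^^ n) x, (g ^^ n) y)" for n
  have pX: "\<forall>n. p n \<in> X \<times> X" unfolding p_def using gpow_in x y by simp
  obtain l s where l: "l \<in> X \<times> X" "strict_mono s" "(p \<circ> s) \<longlonglongrightarrow> l"
    using seq_compactE[OF compact_imp_seq_compact[OF compact_Times[OF cX cX]] pX] by blast
  have "Cauchy (p \<circ> s)" using l(3) by (rule LIMSEQ_imp_Cauchy)
  then obtain M where M: "\<forall>m\<ge>M. \<forall>n\<ge>M. dist ((p \<circ> s) m) ((p \<circ> s) n) < \<delta>"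
    using metric_CauchyD \<delta>(1) by blast
  define i where "i = s M"
  define j where "j = s (M + K)"
  have ij: "i + K \<le> j" unfolding i_def j_def
    by (rule mono_nat_linear_lb) (use l(2) in \<open>simp add: strict_mono_def\<close>)
  have d: "dist (p i) (p j) < \<delta>" using M unfolding i_def j_def by simp
  have dx: "dist ((g ^^ i) x) ((g ^^ j) x) \<le> \<delta>"
    using dist_fst_le[of "p i" "p j"] d unfolding p_def by simp
  have dy: "dist ((g ^^ i) y) ((g ^^ j) y) \<le> \<delta>"
    using dist_snd_le[of "p i" "p j"] d unfolding p_def by simp
  have "dist ((f ^^ j) ((g ^^ i) x)) ((f ^^ j) ((g ^^ j) x)) \<le> \<epsilon>"
    using \<delta>(2) gpow_in x dx by blast
  then have ex: "dist ((f ^^ (j - i)) x) x \<le> \<epsilon>" using fg_pow2[OF x] fg_pow[OF x] ij by simp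
  have "dist ((f ^^ j) ((g ^^ i) y)) ((f ^^ j) ((g ^^ j) y)) \<le> \<epsilon>"
    using \<delta>(2) gpow_in y dy by blast
  then have ey: "dist ((f ^^ (j - i)) y) y \<le> \<epsilon>" using fg_pow2[OF y] fg_pow[OF y] ij by simp
  have "j - i \<ge> K" using ij by simp
  then show ?thesis using ex ey by blast
qed

lemma sep:
  assumes x: "x \<in> X" and y: "y \<in> X" and xy: "x \<noteq> y"
  shows "\<exists>s\<ge>K. dist ((f ^^ s) x) ((f ^^ s) y) > dist x y / 2"
proof -
  have pos: "dist x y / 8 > 0" using xy by simp
  obtain m where m: "m \<ge> K" "dist ((f ^^ m) x) x \<le> dist x y / 8" "dist ((f ^^ m) y) y \<le> dist x y / 8"
    using recur[OF x y pos] by blast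
  have "dist x y \<le> dist x ((f ^^ m) x) + dist ((f ^^ m) x) y" by (rule dist_triangle)
  also have "\<dots> \<le> dist x ((f ^^ m) x) + (dist ((f ^^ m) x) ((f ^^ m) y) + dist ((f ^^ m) y) y)"
    using dist_triangle by simp
  finally have "dist x y \<le> dist ((f ^^ m) x) x + dist ((f ^^ m) x) ((f ^^ m) y) + dist ((f ^^ m) y) y"
    by (simp add: dist_commute)
  moreover have "dist x y > 0" using xy by simp
  ultimately have "dist ((f ^^ m) x) ((f ^^ m) y) > dist x y / 2" using m by linarith
  then show ?thesis using m(1) by blast
qed

lemma not_close_forever:
  assumes x: "x \<in> X" and y: "y \<in> X" and xy: "x \<noteq> y"
    and K: "\<forall>s\<ge>K. dist ((f ^^ s) x) ((f ^^ s) y) \<le> dist x y / 4"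
  shows False
proof -
  obtain s where s: "s \<ge> K" "dist ((f ^^ s) x) ((f ^^ s) y) > dist x y / 2" using sep[OF x y xy] by blast
  have "dist x y > 0" using xy by simp
  then show False using K[rule_format, OF s(1)] s(2) by linarith
qed

lemma two_points:
  assumes "\<not> (\<exists>a. S \<subseteq> {a})"
  shows "\<exists>x y. x \<in> S \<and> y \<in> S \<and> x \<noteq> y"
  using assms by blast

lemma S_TD:
  assumes sh: "shadowing_on X f"
  shows "totally_disconnected X"
  unfolding totally_disconnected_def
proof (intro allI impI)
  fix S assume S: "S \<subseteq> X \<and> connected S"
  show "\<exists>a. S \<subseteq> {a}"
  proof (rule ccontr)
    assume "\<not> (\<exists>a. S \<subseteq> {a})"
    then obtain x y where xy: "x \<in> S" "y \<in> S" "x \<noteq> y" using two_points by blast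
    have xX: "x \<in> X" and yX: "y \<in> X" using xy S by auto
    define D where "D = dist x y / 8"
    have D: "D > 0" unfolding D_def using xy by simp
    obtain \<delta>1 where \<delta>1: "\<delta>1 > 0" "\<forall>x\<in>X. \<forall>y\<in>X. dist x y \<le> \<delta>1 \<longrightarrow> (\<forall>n. dist ((f ^^ n) x) ((f ^^ n) y) \<le> D)"
      using eqcD[OF D] by blast
    define e where "e = min D \<delta>1"
    have e: "e > 0" unfolding e_def using D \<delta>1 by simp
    obtain \<delta> where \<delta>: "\<delta> > 0" "\<forall>xs. (\<forall>i. xs i \<in> X) \<and> (\<forall>i. dist (f (xs i)) (xs (Suc i)) \<le> \<delta>) \<longrightarrow>
        (\<exists>x\<in>X. \<forall>i. dist (xs i) ((f ^^ i) x) \<le> e)"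
      using sh e unfolding shadowing_on_def by blast
    obtain \<eta> where \<eta>: "\<eta> > 0" "\<forall>x\<in>X. \<forall>y\<in>X. dist x y \<le> \<eta> \<longrightarrow> (\<forall>n. dist ((f ^^ n) x) ((f ^^ n) y) \<le> \<delta>)"
      using eqcD[OF \<delta>(1)] by blast
    have "chained S \<eta> x y" using chain_connected S xy \<eta>(1) by blast
    then obtain c K where c: "chain S \<eta> x y c K" unfolding chained_def by blast
    define xs where "xs i = (f ^^ i) (c (min i K))" for i
    have cX: "c (min i K) \<in> X" for i using c S unfolding chain_def by auto
    have xsX: "\<forall>i. xs i \<in> X" unfolding xs_def using fpow_in cX by blast
    have "dist (f (xs i)) (xs (Suc i)) \<le> \<delta>" for i
    proof (cases "i < K")
      case True
      then have "dist (c i) (c (Suc i)) < \<eta>" using c unfolding chain_def by blast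
      moreover have "c i \<in> X" "c (Suc i) \<in> X" using cX[of i] cX[of "Suc i"] True by (simp_all add: min_def)
      ultimately have "dist ((f ^^ Suc i) (c i)) ((f ^^ Suc i) (c (Suc i))) \<le> \<delta>" using \<eta>(2) less_imp_le by blast
      then show ?thesis unfolding xs_def using True by (simp add: min_def)
    next
      case False
      then show ?thesis unfolding xs_def using \<delta>(1) by (simp add: min_def)
    qed
    then obtain z where z: "z \<in> X" "\<forall>i. dist (xs i) ((f ^^ i) z) \<le> e"
      using \<delta>(2) xsX by blast
    have "dist x z \<le> \<delta>1" using z(2)[rule_format, of 0] c unfolding xs_def chain_def e_def by simp
    then have zx: "\<forall>n. dist ((f ^^ n) x) ((f ^^ n) z) \<le> D" using \<delta>1(2) xX z(1) by blast
    have zy: "dist ((f ^^ s) y) ((f ^^ s) z) \<le> D" if "s \<ge> K" for s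
    proof -
      have "xs s = (f ^^ s) y" unfolding xs_def using that c unfolding chain_def by (simp add: min_def)
      then show ?thesis using z(2)[rule_format, of s] unfolding e_def by simp
    qed
    have "\<forall>s\<ge>K. dist ((f ^^ s) x) ((f ^^ s) y) \<le> dist x y / 4"
    proof (intro allI impI)
      fix s assume "s \<ge> K"
      have "dist ((f ^^ s) x) ((f ^^ s) y) \<le> dist ((f ^^ s) x) ((f ^^ s) z) + dist ((f ^^ s) y) ((f ^^ s) z)"
        by (rule dist_triangle2)
      also have "\<dots> \<le> 2 * D" using zx[rule_format, of s] zy[OF \<open>s \<ge> K\<close>] by linarith
      finally show "dist ((f ^^ s) x) ((f ^^ s) y) \<le> dist x y / 4" unfolding D_def by simp
    qed
    then show False using not_close_forever xX yX xy by blast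
  qed
qed

end


primrec stp :: "(nat \<Rightarrow> nat) \<Rightarrow> nat \<Rightarrow> nat \<times> nat" where
  "stp N 0 = (0, 0)"
| "stp N (Suc t) = (if Suc (snd (stp N t)) < N (fst (stp N t))
     then (fst (stp N t), Suc (snd (stp N t))) else (Suc (fst (stp N t)), 0))"

lemma stp_inv: "(\<And>n. N n > 0) \<Longrightarrow> snd (stp N t) < N (fst (stp N t))"
  by (induction t) auto

lemma stp_fst_Suc: "fst (stp N t) \<le> fst (stp N (Suc t))"
  by simp

lemma stp_fst_mono: "t \<le> t' \<Longrightarrow> fst (stp N t) \<le> fst (stp N t')"
  using lift_Suc_mono_le[of "\<lambda>t. fst (stp N t)", OF stp_fst_Suc] by blast

lemma stp_fst_le: "fst (stp N t) \<le> t"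
  by (induction t) auto

lemma stp_run: "stp N t = (n, 0) \<Longrightarrow> j < N n \<Longrightarrow> stp N (t + j) = (n, j)"
proof (induction j)
  case 0 then show ?case by simp
next
  case (Suc j)
  then have "stp N (t + j) = (n, j)" by simp
  then show ?case using Suc.prems by simp
qed

lemma stp_next:
  assumes "\<And>n. N n > 0" "stp N t = (n, 0)"
  shows "stp N (t + N n) = (Suc n, 0)"
proof -
  obtain j where j: "N n = Suc j" using assms(1)[of n] gr0_implies_Suc by blast
  have "stp N (t + j) = (n, j)" using stp_run[OF assms(2)] j by simp
  then show ?thesis using j by simp
qed

lemma stp_reach: "(\<And>n. N n > 0) \<Longrightarrow> \<exists>t. stp N t = (n, 0)"
proof (induction n)
  case 0
  have "stp N 0 = (0, 0)" by simp
  then show ?case by blast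
next
  case (Suc n)
  then obtain t where "stp N t = (n, 0)" by blast
  then show ?case using stp_next Suc.prems by blast
qed

lemma oscillate:
  fixes S :: "'a::metric_space set"
  assumes S: "connected S" and xy: "x \<in> S" "y \<in> S" "x \<noteq> y"
  shows "\<exists>c. (\<forall>t. c t \<in> S) \<and> (\<forall>e>0. \<exists>T. \<forall>t\<ge>T. dist (c t) (c (Suc t)) < e)
             \<and> (\<forall>K. \<exists>t\<ge>K. c t = x) \<and> (\<forall>K. \<exists>t\<ge>K. c t = y)"
proof -
  define P where "P n L M N \<longleftrightarrow> L 0 = x \<and> L M = y \<and> L N = x \<and> M < N \<and> (\<forall>i\<le>N. L i \<in> S)
      \<and> (\<forall>i<N. dist (L i) (L (Suc i)) < 1 / (real n + 1))" for n and L :: "nat \<Rightarrow> 'a" and M N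
  have "\<forall>n. \<exists>p. P n (fst p) (fst (snd p)) (snd (snd p))"
  proof
    fix n
    have e: "1 / (real n + 1) > 0" by simp
    obtain c1 K1 where c1: "chain S (1 / (real n + 1)) x y c1 K1"
      using chain_connected[OF S xy(1,2) e] unfolding chained_def by blast
    obtain c2 K2 where c2: "chain S (1 / (real n + 1)) y x c2 K2"
      using chain_connected[OF S xy(2,1) e] unfolding chained_def by blast
    have K2: "K2 > 0"
    proof (rule ccontr)
      assume "\<not> K2 > 0" then have "K2 = 0" by simp
      then show False using c2 xy(3) unfolding chain_def by auto
    qed
    define L where "L = (\<lambda>i. if i \<le> K1 then c1 i else c2 (i - K1))"
    have ch: "chain S (1 / (real n + 1)) x x L (K1 + K2)" unfolding L_def by (rule chain_append[OF c1 c2])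
    have "L K1 = y" unfolding L_def using c1 unfolding chain_def by simp
    then have "P n L K1 (K1 + K2)" using ch K2 unfolding P_def chain_def by simp
    then show "\<exists>p. P n (fst p) (fst (snd p)) (snd (snd p))" by (intro exI[of _ "(L, K1, K1 + K2)"]) simp
  qed
  then obtain p where p: "\<forall>n. P n (fst (p n)) (fst (snd (p n))) (snd (snd (p n)))"
    using choice[of "\<lambda>n p. P n (fst p) (fst (snd p)) (snd (snd p))"] by blast
  define L where "L n = fst (p n)" for n
  define M where "M n = fst (snd (p n))" for n
  define N where "N n = snd (snd (p n))" for n
  have PL: "P n (L n) (M n) (N n)" for n using p unfolding L_def M_def N_def by blast
  have Npos: "N n > 0" for n using PL[of n] unfolding P_def by auto
  define c where "c t = L (fst (stp N t)) (snd (stp N t))" for t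
  have inv: "snd (stp N t) < N (fst (stp N t))" for t using stp_inv Npos by blast
  have cS: "c t \<in> S" for t unfolding c_def using PL inv unfolding P_def by (meson less_imp_le)
  have step: "dist (c t) (c (Suc t)) < 1 / (real (fst (stp N t)) + 1)" for t
  proof -
    define n where "n = fst (stp N t)"
    define i where "i = snd (stp N t)"
    have i: "i < N n" using inv unfolding n_def i_def by blast
    have d: "dist (L n i) (L n (Suc i)) < 1 / (real n + 1)" using PL[of n] i unfolding P_def by blast
    show ?thesis
    proof (cases "Suc i < N n")
      case True
      then have "c (Suc t) = L n (Suc i)" unfolding c_def n_def i_def by simp
      moreover have "c t = L n i" unfolding c_def n_def i_def by simp
      ultimately show ?thesis using d unfolding n_def by simp
    next
      case False
      then have "Suc i = N n" using i by simp
      then have "L n (Suc i) = x" using PL[of n] unfolding P_def by simp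
      moreover have "L (Suc n) 0 = x" using PL[of "Suc n"] unfolding P_def by simp
      moreover have "c (Suc t) = L (Suc n) 0" using False unfolding c_def n_def i_def by simp
      moreover have "c t = L n i" unfolding c_def n_def i_def by simp
      ultimately show ?thesis using d unfolding n_def by simp
    qed
  qed
  have small: "\<forall>e>0. \<exists>T. \<forall>t\<ge>T. dist (c t) (c (Suc t)) < e"
  proof (intro allI impI)
    fix e :: real assume e: "e > 0"
    obtain n0 where n0: "inverse (real (Suc n0)) < e" using reals_Archimedean[OF e] by blast
    obtain t0 where t0: "stp N t0 = (n0, 0)" using stp_reach Npos by blast
    have "dist (c t) (c (Suc t)) < e" if "t \<ge> t0" for t
    proof -
      have "n0 \<le> fst (stp N t)" using stp_fst_mono[OF that, of N] t0 by simp
      then have "real n0 + 1 \<le> real (fst (stp N t)) + 1" by simp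
      then have "1 / (real (fst (stp N t)) + 1) \<le> 1 / (real n0 + 1)"
        by (intro divide_left_mono) auto
      moreover have "inverse (real (Suc n0)) = 1 / (real n0 + 1)" by (simp add: inverse_eq_divide)
      ultimately show ?thesis using step[of t] n0 by linarith
    qed
    then show "\<exists>T. \<forall>t\<ge>T. dist (c t) (c (Suc t)) < e" by blast
  qed
  have vx: "\<exists>t\<ge>K. c t = x" for K
  proof -
    obtain t where t: "stp N t = (K, 0)" using stp_reach Npos by blast
    have "K \<le> t" using stp_fst_le[of N t] t by simp
    moreover have "c t = x" unfolding c_def using t PL[of K] unfolding P_def by simp
    ultimately show ?thesis by blast
  qed
  have vy: "\<exists>t\<ge>K. c t = y" for K
  proof -
    obtain t where t: "stp N t = (K, 0)" using stp_reach Npos by blast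
    have "K \<le> t" using stp_fst_le[of N t] t by simp
    have MN: "M K < N K" using PL[of K] unfolding P_def by blast
    have "stp N (t + M K) = (K, M K)" using stp_run[OF t MN] .
    then have "c (t + M K) = y" unfolding c_def using PL[of K] unfolding P_def by simp
    moreover have "K \<le> t + M K" using \<open>K \<le> t\<close> by simp
    ultimately show ?thesis by blast
  qed
  show ?thesis using cS small vx vy by blast
qed


context eqsys
begin

lemma LS_TD:
  assumes ls: "limit_shadowing_on X f"
  shows "totally_disconnected X"
  unfolding totally_disconnected_def
proof (intro allI impI)
  fix S assume S: "S \<subseteq> X \<and> connected S"
  show "\<exists>a. S \<subseteq> {a}"
  proof (rule ccontr)
    assume "\<not> (\<exists>a. S \<subseteq> {a})"
    then obtain x y where xy: "x \<in> S" "y \<in> S" "x \<noteq> y" using two_points by blast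
    have xX: "x \<in> X" and yX: "y \<in> X" using xy S by auto
    obtain c where c: "\<forall>t. c t \<in> S" "\<forall>e>0. \<exists>T. \<forall>t\<ge>T. dist (c t) (c (Suc t)) < e"
        "\<forall>K. \<exists>t\<ge>K. c t = x" "\<forall>K. \<exists>t\<ge>K. c t = y"
      using oscillate[of S x y] S xy by blast
    have cX: "c t \<in> X" for t using c(1) S by blast
    define xs where "xs t = (f ^^ t) (c t)" for t
    have xsX: "\<forall>i. xs i \<in> X" unfolding xs_def using fpow_in cX by blast
    have err: "(\<lambda>i. dist (f (xs i)) (xs (Suc i))) \<longlonglongrightarrow> 0"
      unfolding lim_sequentially
    proof (intro allI impI)
      fix r :: real assume r: "r > 0"
      then have r2: "r / 2 > 0" by simp
      obtain \<eta> where \<eta>: "\<eta> > 0" "\<forall>x\<in>X. \<forall>y\<in>X. dist x y \<le> \<eta> \<longrightarrow> (\<forall>n. dist ((f ^^ n) x) ((f ^^ n) y) \<le> r / 2)"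
        using eqcD[OF r2] by blast
      obtain T where T: "\<forall>t\<ge>T. dist (c t) (c (Suc t)) < \<eta>" using c(2) \<eta>(1) by blast
      have "dist (dist (f (xs t)) (xs (Suc t))) 0 < r" if "t \<ge> T" for t
      proof -
        have "dist ((f ^^ Suc t) (c t)) ((f ^^ Suc t) (c (Suc t))) \<le> r / 2"
          using \<eta>(2) cX T that less_imp_le by blast
        then have "dist (f (xs t)) (xs (Suc t)) \<le> r / 2" unfolding xs_def by simp
        then show ?thesis using r by simp
      qed
      then show "\<exists>no. \<forall>n\<ge>no. dist (dist (f (xs n)) (xs (Suc n))) 0 < r" by blast
    qed
    obtain z where z: "z \<in> X" "(\<lambda>i. dist (xs i) ((f ^^ i) z)) \<longlonglongrightarrow> 0"
      using ls xsX err unfolding limit_shadowing_on_def by blast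
    define D where "D = dist x y / 8"
    have D: "D > 0" unfolding D_def using xy by simp
    obtain \<delta>1 where \<delta>1: "\<delta>1 > 0" "\<forall>x\<in>X. \<forall>y\<in>X. dist x y \<le> \<delta>1 \<longrightarrow> (\<forall>n. dist ((f ^^ n) x) ((f ^^ n) y) \<le> D)"
      using eqcD[OF D] by blast
    obtain T where T: "\<forall>t\<ge>T. dist (dist (xs t) ((f ^^ t) z)) 0 < \<delta>1"
      using z(2) \<delta>1(1) unfolding lim_sequentially by blast
    obtain t1 where t1: "t1 \<ge> T" "c t1 = x" using c(3) by blast
    obtain t2 where t2: "t2 \<ge> T" "c t2 = y" using c(4) by blast
    have "dist ((f ^^ t1) x) ((f ^^ t1) z) \<le> \<delta>1"
      using T t1 unfolding xs_def by fastforce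
    then have zx: "\<forall>s\<ge>t1. dist ((f ^^ s) x) ((f ^^ s) z) \<le> D"
      using propagate[OF \<delta>1(2) xX z(1)] by blast
    have "dist ((f ^^ t2) y) ((f ^^ t2) z) \<le> \<delta>1"
      using T t2 unfolding xs_def by fastforce
    then have zy: "\<forall>s\<ge>t2. dist ((f ^^ s) y) ((f ^^ s) z) \<le> D"
      using propagate[OF \<delta>1(2) yX z(1)] by blast
    have "\<forall>s\<ge>max t1 t2. dist ((f ^^ s) x) ((f ^^ s) y) \<le> dist x y / 4"
    proof (intro allI impI)
      fix s assume s: "s \<ge> max t1 t2"
      have "dist ((f ^^ s) x) ((f ^^ s) y) \<le> dist ((f ^^ s) x) ((f ^^ s) z) + dist ((f ^^ s) y) ((f ^^ s) z)"
        by (rule dist_triangle2)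
      also have "\<dots> \<le> 2 * D" using zx[rule_format, of s] zy[rule_format, of s] s by simp
      finally show "dist ((f ^^ s) x) ((f ^^ s) y) \<le> dist x y / 4" unfolding D_def by simp
    qed
    then show False using not_close_forever xX yX xy by blast
  qed
qed

end


context eqsys
begin

definition rel :: "real \<Rightarrow> 'a \<Rightarrow> 'a \<Rightarrow> bool" where
  "rel \<eta> a b \<longleftrightarrow> (\<forall>n. chained X \<eta> ((f ^^ n) a) ((f ^^ n) b))"

lemma rel_refl: "a \<in> X \<Longrightarrow> rel \<eta> a a"
  unfolding rel_def using chained_refl fpow_in by blast

lemma rel_sym: "rel \<eta> a b \<Longrightarrow> rel \<eta> b a"
  unfolding rel_def using chained_sym by blast

lemma rel_trans: "rel \<eta> a b \<Longrightarrow> rel \<eta> b d \<Longrightarrow> rel \<eta> a d"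
  unfolding rel_def using chained_trans by blast

lemma rel_mem: "rel \<eta> a b \<Longrightarrow> a \<in> X \<and> b \<in> X"
proof -
  assume "rel \<eta> a b"
  then have "chained X \<eta> ((f ^^ 0) a) ((f ^^ 0) b)" unfolding rel_def by blast
  then show ?thesis using chained_mem by simp
qed

lemma rel_mono: "rel \<eta> a b \<Longrightarrow> \<eta> \<le> \<eta>' \<Longrightarrow> rel \<eta>' a b"
  unfolding rel_def using chained_mono by blast

lemma rel_f: "rel \<eta> a b \<Longrightarrow> rel \<eta> (f a) (f b)"
  unfolding rel_def
proof
  fix n assume "\<forall>n. chained X \<eta> ((f ^^ n) a) ((f ^^ n) b)"
  then have "chained X \<eta> ((f ^^ Suc n) a) ((f ^^ Suc n) b)" by blast
  then show "chained X \<eta> ((f ^^ n) (f a)) ((f ^^ n) (f b))" by (simp add: funpow_swap1)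
qed

lemma rel_pow: "rel \<eta> a b \<Longrightarrow> rel \<eta> ((f ^^ m) a) ((f ^^ m) b)"
  by (induction m) (auto intro: rel_f)

lemma rel_near: "\<eta> > 0 \<Longrightarrow> \<exists>\<gamma>>0. \<forall>a\<in>X. \<forall>b\<in>X. dist a b \<le> \<gamma> \<longrightarrow> rel \<eta> a b"
proof -
  assume \<eta>: "\<eta> > 0"
  then have "\<eta> / 2 > 0" by simp
  then obtain \<gamma> where \<gamma>: "\<gamma> > 0" "\<forall>x\<in>X. \<forall>y\<in>X. dist x y \<le> \<gamma> \<longrightarrow> (\<forall>n. dist ((f ^^ n) x) ((f ^^ n) y) \<le> \<eta> / 2)"
    using eqcD by blast
  have "rel \<eta> a b" if "a \<in> X" "b \<in> X" "dist a b \<le> \<gamma>" for a b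
    unfolding rel_def
  proof
    fix n
    have "dist ((f ^^ n) a) ((f ^^ n) b) \<le> \<eta> / 2" using \<gamma>(2) that by blast
    then have "dist ((f ^^ n) a) ((f ^^ n) b) < \<eta>" using \<eta> by simp
    then show "chained X \<eta> ((f ^^ n) a) ((f ^^ n) b)" using chained_step fpow_in that by blast
  qed
  then show ?thesis using \<gamma>(1) by blast
qed

lemma rel_inj:
  assumes \<eta>: "\<eta> > 0" and ab: "a \<in> X" "b \<in> X" and r: "rel \<eta> (f a) (f b)"
  shows "rel \<eta> a b"
proof -
  obtain \<gamma> where \<gamma>: "\<gamma> > 0" "\<forall>a\<in>X. \<forall>b\<in>X. dist a b \<le> \<gamma> \<longrightarrow> rel \<eta> a b" using rel_near[OF \<eta>] by blast
  obtain m where m: "m \<ge> 1" "dist ((f ^^ m) a) a \<le> \<gamma>" "dist ((f ^^ m) b) b \<le> \<gamma>"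
    using recur[OF ab \<gamma>(1), of 1] by blast
  have "rel \<eta> ((f ^^ (m - 1)) (f a)) ((f ^^ (m - 1)) (f b))" using rel_pow[OF r] .
  moreover have "(f ^^ (m - 1)) (f w) = (f ^^ m) w" for w
    using m(1) by (metis Suc_diff_le diff_Suc_1 funpow_Suc_right o_apply)
  ultimately have r2: "rel \<eta> ((f ^^ m) a) ((f ^^ m) b)" by simp
  have r1: "rel \<eta> a ((f ^^ m) a)" using \<gamma>(2) fpow_in ab m(2) rel_sym by (metis dist_commute)
  have r3: "rel \<eta> ((f ^^ m) b) b" using \<gamma>(2) fpow_in ab m(3) by blast
  show ?thesis using rel_trans[OF rel_trans[OF r1 r2] r3] .
qed

lemma TD_S:
  assumes TD: "totally_disconnected X"
  shows "shadowing_on X f"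
  unfolding shadowing_on_def
proof (intro allI impI)
  fix e :: real assume e: "e > 0"
  obtain \<eta> where \<eta>: "\<eta> > 0" "\<forall>a\<in>X. \<forall>b\<in>X. chained X \<eta> a b \<longrightarrow> dist a b < e"
    using small_chains[OF cX TD e] by blast
  obtain \<gamma> where \<gamma>: "\<gamma> > 0" "\<forall>a\<in>X. \<forall>b\<in>X. dist a b \<le> \<gamma> \<longrightarrow> rel \<eta> a b" using rel_near[OF \<eta>(1)] by blast
  have "\<forall>xs. (\<forall>i. xs i \<in> X) \<and> (\<forall>i. dist (f (xs i)) (xs (Suc i)) \<le> \<gamma>) \<longrightarrow>
        (\<exists>x\<in>X. \<forall>i. dist (xs i) ((f ^^ i) x) \<le> e)"
  proof (intro allI impI)
    fix xs assume xs: "(\<forall>i. xs i \<in> X) \<and> (\<forall>i. dist (f (xs i)) (xs (Suc i)) \<le> \<gamma>)"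
    have R: "rel \<eta> ((f ^^ i) (xs 0)) (xs i)" for i
    proof (induction i)
      case 0 then show ?case using rel_refl xs by simp
    next
      case (Suc i)
      have "rel \<eta> (f ((f ^^ i) (xs 0))) (f (xs i))" using rel_f[OF Suc] .
      moreover have "rel \<eta> (f (xs i)) (xs (Suc i))" using \<gamma>(2) xs f_in by blast
      ultimately show ?case using rel_trans by simp
    qed
    have "dist (xs i) ((f ^^ i) (xs 0)) \<le> e" for i
    proof -
      have "chained X \<eta> ((f ^^ i) (xs 0)) (xs i)" using R[of i] unfolding rel_def
        by (metis funpow_0)
      then have "dist ((f ^^ i) (xs 0)) (xs i) < e" using \<eta>(2) chained_mem by blast
      then show ?thesis by (simp add: dist_commute)
    qed
    then show "\<exists>x\<in>X. \<forall>i. dist (xs i) ((f ^^ i) x) \<le> e" using xs by blast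
  qed
  then show "\<exists>\<delta>>0. \<forall>xs. (\<forall>i. xs i \<in> X) \<and> (\<forall>i. dist (f (xs i)) (xs (Suc i)) \<le> \<delta>) \<longrightarrow>
        (\<exists>x\<in>X. \<forall>i. dist (xs i) ((f ^^ i) x) \<le> e)" using \<gamma>(1) by blast
qed


lemma TD_LS:
  assumes TD: "totally_disconnected X"
  shows "limit_shadowing_on X f"
  unfolding limit_shadowing_on_def
proof (intro allI impI)
  fix xs assume xs: "(\<forall>i. xs i \<in> X) \<and> (\<lambda>i. dist (f (xs i)) (xs (Suc i))) \<longlonglongrightarrow> 0"
  have xsX: "\<And>i. xs i \<in> X" using xs by blast
  have "\<forall>k. \<exists>\<eta>. \<eta> > 0 \<and> (\<forall>a\<in>X. \<forall>b\<in>X. chained X \<eta> a b \<longrightarrow> dist a b < 1 / (real k + 1))"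
  proof
    fix k
    have "1 / (real k + 1) > 0" by simp
    then show "\<exists>\<eta>. \<eta> > 0 \<and> (\<forall>a\<in>X. \<forall>b\<in>X. chained X \<eta> a b \<longrightarrow> dist a b < 1 / (real k + 1))"
      using small_chains[OF cX TD] by blast
  qed
  then obtain \<eta>f where \<eta>f: "\<forall>k. \<eta>f k > 0 \<and> (\<forall>a\<in>X. \<forall>b\<in>X. chained X (\<eta>f k) a b \<longrightarrow> dist a b < 1 / (real k + 1))"
    using choice[of "\<lambda>k \<eta>. \<eta> > 0 \<and> (\<forall>a\<in>X. \<forall>b\<in>X. chained X \<eta> a b \<longrightarrow> dist a b < 1 / (real k + 1))"] by blast
  define \<mu> where "\<mu> k = Min (\<eta>f ` {..k})" for k
  have \<mu>pos: "\<mu> k > 0" for k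
    unfolding \<mu>_def using \<eta>f by (subst Min_gr_iff) auto
  have \<mu>le: "\<mu> k \<le> \<eta>f k" for k unfolding \<mu>_def by (rule Min_le) auto
  have \<mu>anti: "\<mu> j \<le> \<mu> k" if "k \<le> j" for k j
    unfolding \<mu>_def by (rule Min_antimono) (use that in auto)
  have nest: "rel (\<mu> k) a b" if "k \<le> j" "rel (\<mu> j) a b" for k j a b
    using rel_mono[OF that(2) \<mu>anti[OF that(1)]] .
  have rsmall: "dist a b < 1 / (real k + 1)" if "rel (\<mu> k) a b" for k a b
  proof -
    have "chained X (\<mu> k) ((f ^^ 0) a) ((f ^^ 0) b)" using that unfolding rel_def by blast
    then have "chained X (\<mu> k) a b" by simp
    then have "chained X (\<eta>f k) a b" using chained_mono[OF _ \<mu>le[of k]] by blast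
    then show ?thesis using \<eta>f chained_mem by blast
  qed
  have "\<forall>k. \<exists>\<gamma>. \<gamma> > 0 \<and> (\<forall>a\<in>X. \<forall>b\<in>X. dist a b \<le> \<gamma> \<longrightarrow> rel (\<mu> k) a b)"
    using rel_near \<mu>pos by blast
  then obtain \<gamma> where \<gamma>: "\<forall>k. \<gamma> k > 0 \<and> (\<forall>a\<in>X. \<forall>b\<in>X. dist a b \<le> \<gamma> k \<longrightarrow> rel (\<mu> k) a b)"
    using choice[of "\<lambda>k \<gamma>. \<gamma> > 0 \<and> (\<forall>a\<in>X. \<forall>b\<in>X. dist a b \<le> \<gamma> \<longrightarrow> rel (\<mu> k) a b)"] by blast
  have "\<forall>k. \<exists>T. \<forall>i\<ge>T. dist (f (xs i)) (xs (Suc i)) \<le> \<gamma> k"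
  proof
    fix k
    obtain T where T: "\<forall>i\<ge>T. dist (dist (f (xs i)) (xs (Suc i))) 0 < \<gamma> k"
      using xs \<gamma> unfolding lim_sequentially by blast
    then show "\<exists>T. \<forall>i\<ge>T. dist (f (xs i)) (xs (Suc i)) \<le> \<gamma> k" by fastforce
  qed
  then obtain Tf where Tf: "\<forall>k. \<forall>i\<ge>Tf k. dist (f (xs i)) (xs (Suc i)) \<le> \<gamma> k"
    using choice[of "\<lambda>k T. \<forall>i\<ge>T. dist (f (xs i)) (xs (Suc i)) \<le> \<gamma> k"] by blast
  define T where "T k = (\<Sum>j\<le>k. Tf j)" for k
  have Tge: "Tf k \<le> T k" for k unfolding T_def by (rule member_le_sum) auto
  have Tmono: "T k \<le> T j" if "k \<le> j" for k j unfolding T_def by (rule sum_mono2) (use that in auto)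
  have stepk: "rel (\<mu> k) (f (xs i)) (xs (Suc i))" if "i \<ge> T k" for k i
  proof -
    have "i \<ge> Tf k" using Tge[of k] that by linarith
    then show ?thesis using Tf \<gamma> xsX f_in by blast
  qed
  define z where "z j = (g ^^ T j) (xs (T j))" for j
  have zX: "z j \<in> X" for j unfolding z_def using gpow_in xsX by blast
  have fz: "(f ^^ T j) (z j) = xs (T j)" for j unfolding z_def using fg_pow xsX by blast
  have A: "rel (\<mu> j) ((f ^^ i) (z j)) (xs i)" if "i \<ge> T j" for i j
    using that
  proof (induction i rule: nat_induct_at_least)
    case base then show ?case using fz rel_refl xsX by simp
  next
    case (Suc n)
    have "rel (\<mu> j) (f ((f ^^ n) (z j))) (f (xs n))" using rel_f[OF Suc.IH] .
    then show ?case using rel_trans stepk[OF Suc.hyps] by simp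
  qed
  have B: "rel (\<mu> k) ((f ^^ i) (z j)) (xs i)" if kj: "k \<le> j" and ik: "i \<ge> T k" for k j i
  proof (cases "i \<ge> T j")
    case True then show ?thesis using A nest kj by blast
  next
    case False
    have bk: "T k + d \<le> T j \<longrightarrow> rel (\<mu> k) ((f ^^ (T j - d)) (z j)) (xs (T j - d))" for d
    proof (induction d)
      case 0 show ?case using A[of j "T j"] nest kj by simp
    next
      case (Suc d)
      show ?case
      proof
        assume h: "T k + Suc d \<le> T j"
        define i0 where "i0 = T j - Suc d"
        have i0: "Suc i0 = T j - d" "i0 \<ge> T k" using h unfolding i0_def by simp_all
        have IH: "rel (\<mu> k) ((f ^^ Suc i0) (z j)) (xs (Suc i0))" using Suc h i0(1) by simp
        have "rel (\<mu> k) (f (xs i0)) (xs (Suc i0))" using stepk[OF i0(2)] .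
        then have "rel (\<mu> k) (f ((f ^^ i0) (z j))) (f (xs i0))"
          using IH rel_trans rel_sym by (metis funpow.simps(2) o_apply)
        then have "rel (\<mu> k) ((f ^^ i0) (z j)) (xs i0)"
          using rel_inj[OF \<mu>pos fpow_in[OF zX] xsX] by blast
        then show "rel (\<mu> k) ((f ^^ (T j - Suc d)) (z j)) (xs (T j - Suc d))" unfolding i0_def .
      qed
    qed
    have "T k + (T j - i) \<le> T j" using False ik by simp
    then have "rel (\<mu> k) ((f ^^ (T j - (T j - i))) (z j)) (xs (T j - (T j - i)))" using bk by blast
    moreover have "T j - (T j - i) = i" using False by simp
    ultimately show ?thesis by simp
  qed
  obtain l s where l: "l \<in> X" "strict_mono s" "(z \<circ> s) \<longlonglongrightarrow> l"
    using seq_compactE[OF compact_imp_seq_compact[OF cX], of z] zX by blast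
  have C: "rel (\<mu> k) ((f ^^ i) l) (xs i)" if "i \<ge> T k" for k i
  proof -
    obtain N where N: "\<forall>m\<ge>N. dist ((z \<circ> s) m) l < \<gamma> k" using l(3) \<gamma> unfolding lim_sequentially by blast
    define m where "m = max N k"
    have "dist l (z (s m)) \<le> \<gamma> k" using N unfolding m_def by (simp add: dist_commute less_imp_le)
    then have "rel (\<mu> k) l (z (s m))" using \<gamma> l(1) zX by blast
    then have "rel (\<mu> k) ((f ^^ i) l) ((f ^^ i) (z (s m)))" by (rule rel_pow)
    moreover have "k \<le> s m" using seq_suble[OF l(2), of m] unfolding m_def by simp
    ultimately show ?thesis using B that rel_trans by blast
  qed
  have "(\<lambda>i. dist (xs i) ((f ^^ i) l)) \<longlonglongrightarrow> 0"
    unfolding lim_sequentially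
  proof (intro allI impI)
    fix r :: real assume r: "r > 0"
    obtain k where k: "inverse (real (Suc k)) < r" using reals_Archimedean[OF r] by blast
    have "dist (dist (xs i) ((f ^^ i) l)) 0 < r" if "i \<ge> T k" for i
    proof -
      have "dist ((f ^^ i) l) (xs i) < 1 / (real k + 1)" using rsmall C that by blast
      moreover have "inverse (real (Suc k)) = 1 / (real k + 1)" by (simp add: inverse_eq_divide)
      ultimately show ?thesis using k by (simp add: dist_commute)
    qed
    then show "\<exists>no. \<forall>n\<ge>no. dist (dist (xs n) ((f ^^ n) l)) 0 < r" by blast
  qed
  then show "\<exists>y\<in>X. (\<lambda>i. dist (xs i) ((f ^^ i) y)) \<longlonglongrightarrow> 0" using l(1) by blast
qed

end

theorem lemma3p1:
  fixes X :: "'a::metric_space set" and f :: "'a \<Rightarrow> 'a"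
  assumes "compact X"
    and "\<exists>g. homeomorphism X X f g"
    and "equicontinuous_on X f"
  shows "(limit_shadowing_on X f \<longleftrightarrow> shadowing_on X f)
       \<and> (shadowing_on X f \<longleftrightarrow> (top_of_set X) dim_le 0)
       \<and> (shadowing_on X f \<longleftrightarrow> totally_disconnected X)"
proof -
  obtain g where g: "homeomorphism X X f g" using assms(2) by blast
  interpret eqsys X f g using assms(1) g assms(3) by unfold_locales
  have 1: "shadowing_on X f \<longleftrightarrow> totally_disconnected X" using S_TD TD_S by blast
  have 2: "limit_shadowing_on X f \<longleftrightarrow> totally_disconnected X" using LS_TD TD_LS by blast
  show ?thesis using 1 2 dim0_iff_TD[OF assms(1)] by blast
qed

end
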